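(* Let $\gamma(z)=\sum_{n=1}^{\infty} z^{n-1}\left(\frac{1}{n}-\log\frac{n+1}{n}\right)$ for $z$ in the closed unit disk $D=\{z\in\mathbb{C}:|z|\le 1\}$. Then $\gamma$ is continuous on $D$ and holomorphic on the interior of $D$. However, the left-hand derivative of $\gamma$ at $z=1$ does not exist; more precisely, $$\lim_{t\to 1^-}\frac{\gamma(1)-\gamma(t)}{1-t}=+\infty.$$ In particular, the Taylor series expansion of $\gamma(z)$ at $z=0$ has radius of convergence $1$. *)

theory Defs
  imports "HOL-Analysis.Analysis"
begin

text \<open>Coefficient of z^(n-1) in the paper, reindexed from 0: a n = 1/(n+1) - log((n+2)/(n+1)).\<close>
definition gamma_coeff :: "nat \<Rightarrow> real" where
  "gamma_coeff n = 1 / real (Suc n) - ln (real (n + 2) / real (Suc n))"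

definition gamma_series :: "complex \<Rightarrow> complex" where
  "gamma_series z = (\<Sum>m. complex_of_real (gamma_coeff m) * z ^ m)"

end

theory Submission
  imports Defs "HOL-Real_Asymp.Real_Asymp"
begin


lemma ln_upper6:
  fixes x :: real assumes "0 \<le> x" "x \<le> 1"
  shows "ln (1 + x) \<le> x - x^2/6"
proof -
  define y where "y = x - x^2/6"
  have xx: "x*x \<le> x*1" using assms by (intro mult_left_mono) auto
  have y0: "y \<ge> 5*x/6" using xx unfolding y_def by (simp add: power2_eq_square)
  have "y \<ge> 0" using y0 assms by linarith
  hence "1 + y + y^2/2 \<le> exp y" by (rule exp_lower_Taylor_quadratic)
  moreover have "y^2 \<ge> (5*x/6)^2" using y0 assms by (intro power_mono) auto
  moreover have "(5*x/6)^2 = 25/36 * x^2" by (simp add: power2_eq_square)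
  moreover have "x^2 \<ge> 0" by simp
  ultimately have "1 + x \<le> exp y" unfolding y_def by linarith
  hence "ln (1+x) \<le> ln (exp y)" using assms by (intro ln_mono) auto
  thus ?thesis by (simp add: y_def)
qed

lemma coeff_eq: "gamma_coeff n = 1/real (Suc n) - ln (1 + 1/real (Suc n))"
proof -
  have "real (n+2) / real (Suc n) = 1 + 1/real (Suc n)" by (simp add: field_simps)
  thus ?thesis unfolding gamma_coeff_def by simp
qed

lemma coeff_nonneg: "0 \<le> gamma_coeff n"
  unfolding coeff_eq using ln_add_one_self_le_self[of "1/real (Suc n)"] by simp

lemma coeff_upper: "gamma_coeff n \<le> 1/real (Suc n)^2"
  unfolding coeff_eq using ln_one_plus_pos_lower_bound[of "1/real (Suc n)"]
  by (simp add: power_divide)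

lemma coeff_lower: "gamma_coeff n \<ge> 1/(6 * real (Suc n)^2)"
  unfolding coeff_eq using ln_upper6[of "1/real (Suc n)"]
  by (simp add: power_divide)

lemma summable_inv_sq: "summable (\<lambda>n. 1/real (Suc n)^2)"
proof -
  have "summable (\<lambda>n. inverse (real n ^ 2))" by (rule inverse_power_summable) simp
  hence "summable (\<lambda>n. inverse (real (Suc n) ^ 2))" by (subst summable_Suc_iff)
  thus ?thesis by (simp add: field_simps)
qed

lemma summable_coeff: "summable gamma_coeff"
  by (rule summable_comparison_test'[OF summable_inv_sq, where N=0]) (use coeff_nonneg coeff_upper in auto)

lemma lim_aux: "(r::real) > 1 \<Longrightarrow> filterlim (\<lambda>n::nat. r^n / real (Suc n)^2) at_top at_top"
  by real_asymp



lemma term_bound: "norm (z::complex) \<le> 1 \<Longrightarrow> norm (complex_of_real (gamma_coeff m) * z^m) \<le> gamma_coeff m"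
proof -
  assume z: "norm z \<le> 1"
  have "norm (z^m) \<le> 1" using z by (simp add: norm_power power_le_one)
  hence "gamma_coeff m * norm (z^m) \<le> gamma_coeff m * 1" using coeff_nonneg by (intro mult_left_mono) auto
  thus ?thesis using coeff_nonneg by (simp add: norm_mult)
qed

lemma summable_disk: "norm (z::complex) \<le> 1 \<Longrightarrow> summable (\<lambda>m. complex_of_real (gamma_coeff m) * z^m)"
  by (rule summable_comparison_test'[OF summable_coeff, where N=0]) (use term_bound in auto)

lemma conv_radius_coeff: "conv_radius (\<lambda>n. complex_of_real (gamma_coeff n)) = 1"
proof (rule conv_radius_eqI')
  fix r :: real assume "0 < r" "ereal r < 1"
  thus "summable (\<lambda>n. complex_of_real (gamma_coeff n) * complex_of_real r ^ n)"
    by (intro summable_disk) auto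
next
  fix r :: real assume r: "0 < r" "ereal r > 1"
  hence r1: "r > 1" by simp
  show "\<not> summable (\<lambda>n. norm (complex_of_real (gamma_coeff n) * complex_of_real r ^ n))"
  proof
    assume "summable (\<lambda>n. norm (complex_of_real (gamma_coeff n) * complex_of_real r ^ n))"
    hence "(\<lambda>n. norm (complex_of_real (gamma_coeff n) * complex_of_real r ^ n)) \<longlonglongrightarrow> 0"
      by (rule summable_LIMSEQ_zero)
    hence "eventually (\<lambda>n. norm (complex_of_real (gamma_coeff n) * complex_of_real r ^ n) < 1) sequentially"
      by (rule order_tendstoD) simp
    moreover have "filterlim (\<lambda>n::nat. r^n / real (Suc n)^2) at_top at_top" using lim_aux r1 by blast
    hence "eventually (\<lambda>n. r^n / real (Suc n)^2 \<ge> 6) sequentially"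
      by (simp add: filterlim_at_top)
    ultimately have "eventually (\<lambda>n. False) sequentially"
    proof eventually_elim
      case (elim n)
      have "gamma_coeff n * r^n \<ge> 1/(6 * real (Suc n)^2) * r^n"
        using coeff_lower r by (intro mult_right_mono) auto
      also have "1/(6 * real (Suc n)^2) * r^n = (r^n / real (Suc n)^2) / 6" by simp
      finally have "gamma_coeff n * r^n \<ge> (r^n / real (Suc n)^2) / 6" .
      hence "gamma_coeff n * r^n \<ge> 1" using elim(2) order_trans[of 1 "(r^n / real (Suc n)^2) / 6"] by simp
      moreover have "norm (complex_of_real (gamma_coeff n) * complex_of_real r ^ n) = gamma_coeff n * r^n"
        using coeff_nonneg r by (simp add: norm_mult norm_power)
      ultimately show False using elim(1) by simp
    qed
    thus False by simp
  qed
qed simp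

definition GF :: "complex fps" where "GF = Abs_fps (\<lambda>n. complex_of_real (gamma_coeff n))"

lemma GF_radius: "fps_conv_radius GF = 1"
  unfolding fps_conv_radius_def GF_def using conv_radius_coeff by simp

lemma gamma_eval: "gamma_series = eval_fps GF"
  unfolding gamma_series_def eval_fps_def GF_def by (intro ext) simp

lemma gamma_holo: "gamma_series holomorphic_on ball 0 1"
  unfolding gamma_eval by (rule holomorphic_on_eval_fps) (simp add: GF_radius one_ereal_def)

lemma gamma_taylor: "(deriv ^^ n) gamma_series 0 / fact n = complex_of_real (gamma_coeff n)"
proof -
  have "fps_nth GF n = (deriv ^^ n) (eval_fps GF) 0 / fact n"
    by (rule fps_nth_conv_deriv) (simp add: GF_radius)
  thus ?thesis unfolding gamma_eval by (simp add: GF_def)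
qed

lemma gamma_conv: "conv_radius (\<lambda>n. (deriv ^^ n) gamma_series 0 / fact n) = 1"
  unfolding gamma_taylor by (rule conv_radius_coeff)

lemma gamma_cont: "continuous_on (cball 0 1) gamma_series"
proof -
  have "uniform_limit (cball 0 1) (\<lambda>n x. \<Sum>i<n. complex_of_real (gamma_coeff i) * x^i)
          (\<lambda>x. suminf (\<lambda>i. complex_of_real (gamma_coeff i) * x^i)) sequentially"
    by (rule Weierstrass_m_test[OF _ summable_coeff]) (use term_bound in auto)
  hence "continuous_on (cball 0 1) (\<lambda>x. suminf (\<lambda>i. complex_of_real (gamma_coeff i) * x^i))"
    by (rule uniform_limit_theorem[rotated]) (auto intro!: always_eventually continuous_intros)
  thus ?thesis unfolding gamma_series_def .
qed

definition G :: "real \<Rightarrow> real" where "G t = (\<Sum>m. gamma_coeff m * t^m)"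

lemma summable_real: "\<bar>t\<bar> \<le> 1 \<Longrightarrow> summable (\<lambda>m. gamma_coeff m * t^m)"
proof -
  assume t: "\<bar>t\<bar> \<le> 1"
  have "summable (\<lambda>m. complex_of_real (gamma_coeff m * t^m))"
    using summable_disk[of "of_real t"] t by (simp only: of_real_mult of_real_power norm_of_real)
  thus ?thesis using summable_of_real_iff by blast
qed

lemma gamma_real: "\<bar>t\<bar> \<le> 1 \<Longrightarrow> gamma_series (complex_of_real t) = complex_of_real (G t)"
proof -
  assume t: "\<bar>t\<bar> \<le> 1"
  have "(\<lambda>m. complex_of_real (gamma_coeff m * t^m)) sums complex_of_real (G t)"
    unfolding G_def by (rule sums_of_real) (rule summable_sums[OF summable_real[OF t]])
  hence "(\<lambda>m. complex_of_real (gamma_coeff m) * complex_of_real t ^ m) sums complex_of_real (G t)"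
    by simp
  thus ?thesis unfolding gamma_series_def by (rule sums_unique[symmetric])
qed



lemma Q_formula:
  assumes "0 \<le> t" "t < 1"
  shows "Re ((gamma_series 1 - gamma_series (complex_of_real t)) / (1 - complex_of_real t)) = (G 1 - G t)/(1-t)"
proof -
  have "gamma_series 1 = complex_of_real (G 1)" using gamma_real[of 1] by simp
  moreover have "gamma_series (complex_of_real t) = complex_of_real (G t)" using gamma_real[of t] assms by simp
  ultimately have "(gamma_series 1 - gamma_series (complex_of_real t)) / (1 - complex_of_real t)
     = complex_of_real ((G 1 - G t)/(1-t))" by simp
  thus ?thesis by (metis Re_complex_of_real)
qed

lemma Q_sums:
  assumes "0 \<le> t" "t < 1"
  shows "(\<lambda>m. gamma_coeff m * (\<Sum>k<m. t^k)) sums ((G 1 - G t)/(1-t))"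
proof -
  have "(\<lambda>m. gamma_coeff m * 1^m) sums G 1" unfolding G_def by (rule summable_sums[OF summable_real]) simp
  moreover have "(\<lambda>m. gamma_coeff m * t^m) sums G t" unfolding G_def by (rule summable_sums[OF summable_real]) (use assms in simp)
  ultimately have "(\<lambda>m. (gamma_coeff m * 1^m - gamma_coeff m * t^m) / (1-t)) sums ((G 1 - G t)/(1-t))"
    by (intro sums_divide sums_diff)
  moreover have "(gamma_coeff m * 1^m - gamma_coeff m * t^m) / (1-t) = gamma_coeff m * (\<Sum>k<m. t^k)" for m
    using assms by (simp add: sum_gp_strict right_diff_distrib)
  ultimately show ?thesis by simp
qed

lemma harm_bound: "inverse (real m) \<le> 24 * (gamma_coeff m * real m)"
proof (cases "m = 0")
  case False
  hence m1: "real m \<ge> 1" by simp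
  have "real (Suc m) \<le> 2 * real m" using m1 by simp
  hence sq: "real (Suc m)^2 \<le> (2 * real m)^2" by (intro power_mono) auto
  have "inverse (real m) = 24 * (1 / (6 * (2 * real m)^2) * real m)" using m1 by (simp add: field_simps power2_eq_square)
  also have "\<dots> \<le> 24 * (1 / (6 * real (Suc m)^2) * real m)"
    using sq m1 by (intro mult_left_mono mult_right_mono divide_left_mono) auto
  also have "\<dots> \<le> 24 * (gamma_coeff m * real m)"
    using coeff_lower[of m] m1 by (intro mult_left_mono mult_right_mono) auto
  finally show ?thesis .
qed (simp add: coeff_nonneg)

lemma not_summable_mcoeff: "\<not> summable (\<lambda>m. gamma_coeff m * real m)"
proof
  assume "summable (\<lambda>m. gamma_coeff m * real m)"
  hence "summable (\<lambda>m. 24 * (gamma_coeff m * real m))" by (rule summable_mult)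
  hence "summable (\<lambda>m. inverse (real m))"
    by (rule summable_comparison_test'[where N=0]) (use harm_bound in auto)
  thus False using not_summable_harmonic[where 'a=real] by simp
qed

lemma unbounded: "\<exists>N. (\<Sum>m<N. gamma_coeff m * real m) > B"
proof (rule ccontr)
  assume "\<not> ?thesis"
  hence "\<And>N. (\<Sum>m<N. gamma_coeff m * real m) \<le> B" by (simp add: not_less)
  hence "summable (\<lambda>m. gamma_coeff m * real m)"
    by (intro summableI_nonneg_bounded[where x=B]) (auto simp: coeff_nonneg)
  thus False using not_summable_mcoeff by simp
qed

lemma gamma_limit: "filterlim (\<lambda>t::real. Re ((gamma_series 1 - gamma_series (complex_of_real t))
                                     / (1 - complex_of_real t))) at_top (at_left 1)"
proof (subst filterlim_at_top, intro allI)
  fix Z :: real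
  obtain N where N: "(\<Sum>m<N. gamma_coeff m * real m) > Z" using unbounded by blast
  define P where "P t = (\<Sum>m<N. gamma_coeff m * (\<Sum>k<m. t^k))" for t :: real
  have P1: "P 1 = (\<Sum>m<N. gamma_coeff m * real m)" unfolding P_def by simp
  have "isCont P 1" unfolding P_def by (intro continuous_intros)
  hence "(P \<longlongrightarrow> P 1) (at_left 1)" by (simp add: isCont_def filterlim_at_split)
  hence "eventually (\<lambda>t. P t > Z) (at_left 1)" using N P1 by (intro order_tendstoD) auto
  moreover have "eventually (\<lambda>t. t \<in> {0<..<1}) (at_left (1::real))" by (rule eventually_at_left_real) simp
  ultimately show "eventually (\<lambda>t. Z \<le> Re ((gamma_series 1 - gamma_series (complex_of_real t))
                                     / (1 - complex_of_real t))) (at_left 1)"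
  proof eventually_elim
    case (elim t)
    hence t: "0 \<le> t" "t < 1" by auto
    have "P t \<le> suminf (\<lambda>m. gamma_coeff m * (\<Sum>k<m. t^k))"
      unfolding P_def using t
      by (intro sum_le_suminf sums_summable[OF Q_sums[OF t]]) (auto intro!: mult_nonneg_nonneg sum_nonneg coeff_nonneg)
    also have "\<dots> = (G 1 - G t)/(1-t)" using sums_unique[OF Q_sums[OF t]] by simp
    finally have "P t \<le> (G 1 - G t)/(1-t)" .
    thus ?case using elim(1) Q_formula[OF t] by linarith
  qed
qed


theorem theorem5:
  shows "continuous_on (cball 0 1) gamma_series
       \<and> gamma_series holomorphic_on ball 0 1
       \<and> (\<forall>t::real. t \<in> {-1..1} \<longrightarrow> gamma_series (complex_of_real t) \<in> \<real>)
       \<and> filterlim (\<lambda>t::real. Re ((gamma_series 1 - gamma_series (complex_of_real t))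
                                     / (1 - complex_of_real t))) at_top (at_left 1)
       \<and> conv_radius (\<lambda>n. (deriv ^^ n) gamma_series 0 / fact n) = 1"
proof (intro conjI allI impI)
  fix t :: real assume "t \<in> {-1..1}"
  hence "\<bar>t\<bar> \<le> 1" by auto
  thus "gamma_series (complex_of_real t) \<in> \<real>" using gamma_real by simp
qed (fact gamma_cont gamma_holo gamma_limit gamma_conv)+

end
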